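(* Let $k\ge 2$, $r,r'\ge1$ be integers, let $P:[r]^k\to\{0,1\}$ and $P':[r']^k\to\{0,1\}$ be $k$-ary predicates, and let $V$ be a finite set with $n=|V|$. Suppose there is a function $f_P:\mathrm{Part}_r(V)\to\mathrm{Part}_{r'}(V^\gamma)$ such that for every weighted directed $k$-uniform hypergraph $H$ on vertex set $V$ and every $\mathcal{A}\in\mathrm{Part}_r(V)$, $$\mathrm{Val}_{H,P}(\mathcal{A})=\mathrm{Val}_{\gamma(H),P'}(f_P(\mathcal{A})),$$ where $\gamma(H)$ is the $k$-partite $k$-fold cover of $H$. Let $H$ be a weighted directed $k$-uniform hypergraph on $V$ and $0<\varepsilon<1$. If there is an $\varepsilon$-$P'$-sparsifier of $\gamma(H)$ with $g(n)$ hyperedges, then there is an $\varepsilon$-$P$-sparsifier of $H$ with $g(n)$ hyperedges.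
   Context: $[r]=\{0,\dots,r-1\}$. A weighted directed $k$-uniform hypergraph $H=(V,E,w)$ has $E$ a set of ordered $k$-tuples of distinct vertices and $w:E\to\mathbb{R}_{>0}$. Its $k$-partite $k$-fold cover is $\gamma(H)=(V^\gamma,E^\gamma,w^\gamma)$ with $V^\gamma=\{v^{(0)},\dots,v^{(k-1)}:v\in V\}$ ($k$ copies of each vertex), $E^\gamma=\{(v_1^{(0)},\dots,v_k^{(k-1)}):(v_1,\dots,v_k)\in E\}$, and $w^\gamma(v_1^{(0)},\dots,v_k^{(k-1)})=w(v_1,\dots,v_k)$; $V^\gamma$ depends only on $V$. $\mathrm{Part}_r(X)$ is the set of ordered $r$-tuples $(A_0,\dots,A_{r-1})$ of pairwise disjoint, possibly empty, subsets of $X$ with union $X$, identified with assignments $A:X\to[r]$ via $A_j=A^{-1}(j)$. For $Q:[s]^k\to\{0,1\}$, a hypergraph $H=(X,E,w)$ and $\mathcal{A}\in\mathrm{Part}_s(X)$ with assignment $A$, $\mathrm{Val}_{H,Q}(\mathcal{A})=\sum_{e\in E}w(e)Q(A(e))$, where $A$ is applied entrywise. An $\varepsilon$-$Q$-sparsifier of $H=(X,E,w)$ is $H_\varepsilon=(X,E_\varepsilon,w_\varepsilon)$ with $E_\varepsilon\subseteq E$, $w_\varepsilon:E_\varepsilon\to\mathbb{R}_{>0}$, such that for every $\mathcal{A}\in\mathrm{Part}_s(X)$, $(1-\varepsilon)\mathrm{Val}_{H,Q}(\mathcal{A})\le\mathrm{Val}_{H_\varepsilon,Q}(\mathcal{A})\le(1+\varepsilon)\mathrm{Val}_{H,Q}(\mathcal{A})$;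 its number of hyperedges is $|E_\varepsilon|$. *)

theory Defs
  imports Complex_Main "HOL-Library.FuncSet"
begin

text \<open>Hyperedges are lists (ordered k-tuples). A weighted directed k-uniform hypergraph
 on vertex set V is given by a set of hyperedges E and a weight function w.\<close>

definition wdhg :: "nat \<Rightarrow> 'a set \<Rightarrow> 'a list set \<Rightarrow> ('a list \<Rightarrow> real) \<Rightarrow> bool" where
  "wdhg k V E w \<longleftrightarrow>
     (\<forall>e\<in>E. length e = k \<and> distinct e \<and> set e \<subseteq> V) \<and> (\<forall>e\<in>E. w e > 0)"

definition Part :: "nat \<Rightarrow> 'a set \<Rightarrow> ('a \<Rightarrow> nat) set" where
  "Part r X = X \<rightarrow>\<^sub>E {..<r}"

definition Val :: "'a list set \<Rightarrow> ('a list \<Rightarrow> real) \<Rightarrow> (nat list \<Rightarrow> bool) \<Rightarrow> ('a \<Rightarrow> nat) \<Rightarrow> real" where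
  "Val E w Q A = (\<Sum>e\<in>E. w e * of_bool (Q (map A e)))"

text \<open>k-partite k-fold cover: vertex v^(i) is (v,i).\<close>
definition cover_vertices :: "nat \<Rightarrow> 'a set \<Rightarrow> ('a \<times> nat) set" where
  "cover_vertices k V = V \<times> {..<k}"

definition cover_edge :: "nat \<Rightarrow> 'a list \<Rightarrow> ('a \<times> nat) list" where
  "cover_edge k e = zip e [0..<k]"

definition cover_edges :: "nat \<Rightarrow> 'a list set \<Rightarrow> ('a \<times> nat) list set" where
  "cover_edges k E = cover_edge k ` E"

definition cover_weight :: "('a list \<Rightarrow> real) \<Rightarrow> ('a \<times> nat) list \<Rightarrow> real" where
  "cover_weight w e' = w (map fst e')"

definition is_sparsifier ::
  "nat \<Rightarrow> (nat list \<Rightarrow> bool) \<Rightarrow> real \<Rightarrow> 'a set \<Rightarrow> 'a list set \<Rightarrow> ('a list \<Rightarrow> real)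
     \<Rightarrow> 'a list set \<Rightarrow> ('a list \<Rightarrow> real) \<Rightarrow> bool" where
  "is_sparsifier s Q eps X E w E' w' \<longleftrightarrow>
     E' \<subseteq> E \<and> (\<forall>e\<in>E'. w' e > 0) \<and>
     (\<forall>A\<in>Part s X. (1 - eps) * Val E w Q A \<le> Val E' w' Q A \<and>
                      Val E' w' Q A \<le> (1 + eps) * Val E w Q A)"

end

theory Submission
  imports Defs
begin

lemma map_fst_cover_edge: "length e = k \<Longrightarrow> map fst (cover_edge k e) = e"
  unfolding cover_edge_def by simp

theorem proposition13:
  fixes k r r' :: nat
    and P P' :: "nat list \<Rightarrow> bool"
    and V :: "'v set"
    and fP :: "('v \<Rightarrow> nat) \<Rightarrow> ('v \<times> nat \<Rightarrow> nat)"
    and E :: "'v list set" and w :: "'v list \<Rightarrow> real"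
    and eps :: real and g :: "nat \<Rightarrow> nat"
  assumes "k \<ge> 2" and "r \<ge> 1" and "r' \<ge> 1"
    and "finite V"
    and "\<forall>A\<in>Part r V. fP A \<in> Part r' (cover_vertices k V)"
    and "\<forall>E0 w0. wdhg k V E0 w0 \<longrightarrow>
           (\<forall>A\<in>Part r V. Val E0 w0 P A = Val (cover_edges k E0) (cover_weight w0) P' (fP A))"
    and "wdhg k V E w"
    and "0 < eps" and "eps < 1"
    and "\<exists>E' w'. is_sparsifier r' P' eps (cover_vertices k V) (cover_edges k E) (cover_weight w) E' w'
                \<and> card E' = g (card V)"
  shows "\<exists>E' w'. is_sparsifier r P eps V E w E' w' \<and> card E' = g (card V)"
proof -
  note fp = assms(5) and hom = assms(6) and wd = assms(7)
  obtain E' w' where sp: "is_sparsifier r' P' eps (cover_vertices k V) (cover_edges k E) (cover_weight w) E' w'"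
    and cE: "card E' = g (card V)" using assms(10) by blast
  have sub: "E' \<subseteq> cover_edge k ` E" and pos: "\<forall>e\<in>E'. w' e > 0"
    using sp unfolding is_sparsifier_def cover_edges_def by auto
  have len: "\<And>e. e \<in> E \<Longrightarrow> length e = k" using wd unfolding wdhg_def by auto
  define Es where "Es = map fst ` E'"
  define ws where "ws = (\<lambda>e. w' (cover_edge k e))"
  have bk: "\<And>x. x \<in> E' \<Longrightarrow> cover_edge k (map fst x) = x \<and> map fst x \<in> E"
  proof -
    fix x assume "x \<in> E'"
    then obtain e where e: "e \<in> E" "x = cover_edge k e" using sub by blast
    then have "map fst x = e" using len map_fst_cover_edge by blast
    then show "cover_edge k (map fst x) = x \<and> map fst x \<in> E" using e by simp
  qed
  have EsE: "Es \<subseteq> E" using bk unfolding Es_def by auto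
  have inj: "inj_on (map fst) E'" by (metis bk inj_onI)
  have card: "card Es = card E'" unfolding Es_def using inj card_image by blast
  have pos'': "\<forall>e\<in>Es. ws e > 0" using pos bk unfolding Es_def ws_def by auto
  have wd'': "wdhg k V Es ws" using wd EsE pos'' unfolding wdhg_def by auto
  have ce: "cover_edges k Es = E'"
  proof -
    have "cover_edges k Es = (\<lambda>x. cover_edge k (map fst x)) ` E'"
      unfolding cover_edges_def Es_def image_image by simp
    also have "\<dots> = id ` E'" using bk by (intro image_cong) auto
    finally show ?thesis by simp
  qed
  have VE: "\<And>B. Val E' (cover_weight ws) P' B = Val E' w' P' B"
    unfolding Val_def cover_weight_def ws_def using bk by (intro sum.cong) auto
  have "is_sparsifier r P eps V E w Es ws"
    unfolding is_sparsifier_def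
  proof (intro conjI ballI)
    show "Es \<subseteq> E" by fact
    fix e assume "e \<in> Es" then show "ws e > 0" using pos'' by auto
  next
    fix A assume A: "A \<in> Part r V"
    have fA: "fP A \<in> Part r' (cover_vertices k V)" using fp A by auto
    have e1: "Val E w P A = Val (cover_edges k E) (cover_weight w) P' (fP A)" using hom wd A by blast
    have e2: "Val Es ws P A = Val E' w' P' (fP A)" using hom wd'' A ce VE by metis
    show "(1 - eps) * Val E w P A \<le> Val Es ws P A" "Val Es ws P A \<le> (1 + eps) * Val E w P A"
      using sp fA e1 e2 unfolding is_sparsifier_def by auto
  qed
  then show ?thesis using card cE by metis
qed

end
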